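(* Let $\mathcal{X}\subseteq\mathbb{R}^d$ be closed convex, $\mathcal{Z}$ a set, $f:\mathcal{X}\times\mathcal{Z}\to\mathbb{R}$ with $f(\cdot,z)$ convex and $L$-Lipschitz for all $z$, and $S=(z_1,\dots,z_n)\in\mathcal{Z}^n$ with $F_S(x)=\frac1n\sum_{i=1}^nf(x,z_i)$. Let $\pi$ be an arbitrary permutation of $[n]$ and consider fixed-permutation SGD with step size constant within each epoch: $x^k_1=x^{k-1}_{n+1}$ and $x^k_{t+1}=\mathsf{Proj}_{\mathcal{X}}(x^k_t-\eta_k\nabla f(x^k_t,z_{\pi(t)}))$ for $t=1,\dots,n$, where $\eta_k>0$. Write $x^k=x^k_1$. Then for every epoch $k$ and every $y\in\mathcal{X}$, $$\eta_k[F_S(x^k)-F_S(y)]\le\frac1{2n}\big[\|x^k-y\|^2-\|x^{k+1}-y\|^2\big]+\frac{\eta_k^2L^2(n+2)}{2}.$$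
   Context: $\|\cdot\|$ is the Euclidean norm and $\mathsf{Proj}_{\mathcal{X}}$ the Euclidean projection; $\nabla f(x,z)$ is a fixed selection of a subgradient of $f(\cdot,z)$ at $x$, assumed to have norm at most $L$ (Lipschitz on an open set containing $\mathcal{X}$). *)

theory Defs
  imports "HOL-Analysis.Analysis"
begin

text \<open>Within-epoch iterates of fixed-permutation projected SGD.
  perm_sgd_inner X g S perm eta x t is x_{t+1} of the epoch started at x_1 = x,
  using step size eta, i.e.
  x_{t+1} = Proj_X (x_t - eta * g(x_t, z_{perm(t)})).\<close>
primrec perm_sgd_inner ::
  "'a::euclidean_space set \<Rightarrow> ('a \<Rightarrow> 'z \<Rightarrow> 'a) \<Rightarrow> (nat \<Rightarrow> 'z) \<Rightarrow> (nat \<Rightarrow> nat)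
    \<Rightarrow> real \<Rightarrow> 'a \<Rightarrow> nat \<Rightarrow> 'a" where
  "perm_sgd_inner X g S perm eta x 0 = x"
| "perm_sgd_inner X g S perm eta x (Suc t) =
     closest_point X (perm_sgd_inner X g S perm eta x t
        - eta *\<^sub>R g (perm_sgd_inner X g S perm eta x t) (S (perm (Suc t))))"

definition emp_risk :: "('a \<Rightarrow> 'z \<Rightarrow> real) \<Rightarrow> (nat \<Rightarrow> 'z) \<Rightarrow> nat \<Rightarrow> 'a \<Rightarrow> real" where
  "emp_risk f S n x = (1 / real n) * (\<Sum>i=1..n. f x (S i))"

end

theory Submission
  imports Defs
begin

lemma gauss_real: "(\<Sum>t<n. real t) * 2 = real n * (real n - 1)"
  by (induction n) (auto simp: algebra_simps)

lemma epoch_bound: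
  fixes X U :: "'a::euclidean_space set" and Z :: "'z set"
    and f :: "'a \<Rightarrow> 'z \<Rightarrow> real" and g :: "'a \<Rightarrow> 'z \<Rightarrow> 'a"
    and L :: real and n :: nat and S :: "nat \<Rightarrow> 'z" and perm :: "nat \<Rightarrow> nat"
    and eta :: real and w0 y :: 'a
  assumes X_closed: "closed X" and X_convex: "convex X"
    and XU: "X \<subseteq> U"
    and f_lip: "\<And>z. z \<in> Z \<Longrightarrow> L-lipschitz_on U (\<lambda>w. f w z)"
    and g_subgrad: "\<And>z w v. z \<in> Z \<Longrightarrow> w \<in> U \<Longrightarrow> v \<in> U \<Longrightarrow>
                      f v z \<ge> f w z + g w z \<bullet> (v - w)"
    and g_bound: "\<And>z w. z \<in> Z \<Longrightarrow> w \<in> U \<Longrightarrow> norm (g w z) \<le> L"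
    and n_pos: "n \<ge> 1"
    and S_in: "\<And>i. i \<in> {1..n} \<Longrightarrow> S i \<in> Z"
    and pi_perm: "bij_betw perm {1..n} {1..n}"
    and eta_pos: "eta > 0"
    and w0X: "w0 \<in> X" and yX: "y \<in> X"
  shows "eta * (emp_risk f S n w0 - emp_risk f S n y)
             \<le> 1 / (2 * real n) * ((norm (w0 - y))\<^sup>2 - (norm (perm_sgd_inner X g S perm eta w0 n - y))\<^sup>2)
               + eta\<^sup>2 * L\<^sup>2 * (real n + 2) / 2"
proof -
  define w where "w = perm_sgd_inner X g S perm eta w0"
  define z where "z = (\<lambda>t. S (perm (Suc t)))"
  have Xne: "X \<noteq> {}" using w0X by auto
  have wX: "w t \<in> X" for t
    by (cases t) (auto simp: w_def w0X intro: closest_point_in_set[OF X_closed Xne])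
  have wU: "w t \<in> U" for t using wX XU by auto
  have zZ: "t < n \<Longrightarrow> z t \<in> Z" for t
  proof -
    assume "t < n"
    hence "Suc t \<in> {1..n}" by auto
    hence "perm (Suc t) \<in> {1..n}" using pi_perm by (auto simp: bij_betw_def)
    thus ?thesis unfolding z_def using S_in by blast
  qed
  have L0: "L \<ge> 0" using g_bound[OF zZ[of 0] wU[of 0]] n_pos norm_ge_zero[of "g (w 0) (z 0)"] by linarith
  have wS: "w (Suc t) = closest_point X (w t - eta *\<^sub>R g (w t) (z t))" for t
    by (simp add: w_def z_def)
  have step: "dist (w (Suc t)) (w t) \<le> eta * L" if "t < n" for t
  proof -
    have "dist (w (Suc t)) (w t) = dist (closest_point X (w t - eta *\<^sub>R g (w t) (z t))) (closest_point X (w t))"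
      using wS closest_point_self[OF wX] by simp
    also have "\<dots> \<le> dist (w t - eta *\<^sub>R g (w t) (z t)) (w t)"
      by (rule closest_point_lipschitz[OF X_convex X_closed Xne])
    also have "\<dots> = eta * norm (g (w t) (z t))" using eta_pos by (simp add: dist_norm)
    also have "\<dots> \<le> eta * L" using g_bound[OF zZ[OF that] wU] eta_pos by (simp add: mult_left_mono)
    finally show ?thesis .
  qed
  have drift: "t \<le> n \<Longrightarrow> dist (w t) w0 \<le> real t * (eta * L)" for t
  proof (induction t)
    case 0 then show ?case by (simp add: w_def)
  next
    case (Suc t)
    have "dist (w (Suc t)) w0 \<le> dist (w (Suc t)) (w t) + dist (w t) w0" by (rule dist_triangle)
    also have "\<dots> \<le> eta * L + real t * (eta * L)" using Suc step[of t] by force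
    finally show ?case by (simp add: algebra_simps)
  qed
  have descent: "2 * eta * (f (w t) (z t) - f y (z t)) \<le> (norm (w t - y))\<^sup>2 - (norm (w (Suc t) - y))\<^sup>2 + eta\<^sup>2 * L\<^sup>2"
    if "t < n" for t
  proof -
    define G where "G = g (w t) (z t)"
    have "norm (w (Suc t) - y) \<le> norm (w t - eta *\<^sub>R G - y)"
      using closest_point_lipschitz[OF X_convex X_closed Xne, of "w t - eta *\<^sub>R G" y]
        closest_point_self[OF yX] wS[of t] by (simp add: dist_norm G_def)
    hence "(norm (w (Suc t) - y))\<^sup>2 \<le> (norm (w t - eta *\<^sub>R G - y))\<^sup>2"
      by (simp add: power_mono)
    also have "(norm (w t - eta *\<^sub>R G - y))\<^sup>2 = (norm (w t - y))\<^sup>2 - 2 * eta * (G \<bullet> (w t - y)) + eta\<^sup>2 * (norm G)\<^sup>2"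
    proof -
      have e: "w t - eta *\<^sub>R G - y = (w t - y) - eta *\<^sub>R G" by (simp add: algebra_simps)
      have "\<And>a::'a. (norm (a - eta *\<^sub>R G))\<^sup>2 = (norm a)\<^sup>2 - 2 * eta * (G \<bullet> a) + eta\<^sup>2 * (norm G)\<^sup>2"
        unfolding power2_norm_eq_inner
        by (simp add: inner_diff_left inner_diff_right inner_commute algebra_simps power2_eq_square)
      thus ?thesis unfolding e by blast
    qed
    also have "eta\<^sup>2 * (norm G)\<^sup>2 \<le> eta\<^sup>2 * L\<^sup>2"
      using g_bound[OF zZ[OF that] wU] G_def by (simp add: mult_left_mono power_mono)
    moreover have "f y (z t) \<ge> f (w t) (z t) + G \<bullet> (y - w t)"
      using g_subgrad[OF zZ[OF that] wU, of y] yX XU G_def by auto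
    moreover have "G \<bullet> (y - w t) = - (G \<bullet> (w t - y))" by (simp add: inner_diff_right)
    ultimately show ?thesis using eta_pos
      by (smt (verit, ccfv_threshold) mult_left_mono)
  qed
  have lip: "f w0 (z t) \<le> f (w t) (z t) + L * (real t * (eta * L))" if "t < n" for t
  proof -
    have "dist (f w0 (z t)) (f (w t) (z t)) \<le> L * dist w0 (w t)"
      by (rule lipschitz_onD[OF f_lip[OF zZ[OF that]]]) (use wU w0X XU in auto)
    also have "\<dots> \<le> L * (real t * (eta * L))"
      using drift[of t] that L0 by (simp add: dist_commute mult_left_mono)
    finally show ?thesis by (simp add: dist_real_def)
  qed
  have tele: "(\<Sum>t<n. 2 * eta * (f (w t) (z t) - f y (z t)))
      \<le> (\<Sum>t<n. (norm (w t - y))\<^sup>2 - (norm (w (Suc t) - y))\<^sup>2 + eta\<^sup>2 * L\<^sup>2)"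
    by (rule sum_mono) (use descent in auto)
  also have "\<dots> = (norm (w 0 - y))\<^sup>2 - (norm (w n - y))\<^sup>2 + real n * (eta\<^sup>2 * L\<^sup>2)"
    using sum_lessThan_telescope'[of "\<lambda>t. (norm (w t - y))\<^sup>2" n] by (simp add: sum.distrib)
  finally have tele2: "(\<Sum>t<n. 2 * eta * (f (w t) (z t) - f y (z t)))
      \<le> (norm (w 0 - y))\<^sup>2 - (norm (w n - y))\<^sup>2 + real n * (eta\<^sup>2 * L\<^sup>2)" .
  have lipsum: "(\<Sum>t<n. 2 * eta * (f w0 (z t) - f y (z t)))
      \<le> (\<Sum>t<n. 2 * eta * (f (w t) (z t) - f y (z t)) + 2 * eta * L * eta * L * real t)"
  proof (rule sum_mono)
    fix t assume "t \<in> {..<n}"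
    hence "f w0 (z t) \<le> f (w t) (z t) + L * (real t * (eta * L))" using lip by auto
    hence "2 * eta * f w0 (z t) \<le> 2 * eta * (f (w t) (z t) + L * (real t * (eta * L)))"
      using eta_pos by (simp add: mult_left_mono)
    thus "2 * eta * (f w0 (z t) - f y (z t))
      \<le> 2 * eta * (f (w t) (z t) - f y (z t)) + 2 * eta * L * eta * L * real t"
      by (simp add: algebra_simps)
  qed
  also have "\<dots> = (\<Sum>t<n. 2 * eta * (f (w t) (z t) - f y (z t))) + eta * L * eta * L * ((\<Sum>t<n. real t) * 2)"
    by (simp add: sum.distrib sum_distrib_left sum_distrib_right mult.assoc; rule sum.cong; simp add: algebra_simps)
  also have "\<dots> = (\<Sum>t<n. 2 * eta * (f (w t) (z t) - f y (z t))) + eta\<^sup>2 * L\<^sup>2 * (real n * (real n - 1))"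
    by (simp add: gauss_real power2_eq_square)
  finally have A: "(\<Sum>t<n. 2 * eta * (f w0 (z t) - f y (z t)))
      \<le> (norm (w0 - y))\<^sup>2 - (norm (w n - y))\<^sup>2 + eta\<^sup>2 * L\<^sup>2 * (real n * real n)"
    using tele2 by (simp add: w_def algebra_simps)
  have reidx: "(\<Sum>i=1..n. h (S i)) = (\<Sum>t<n. h (z t))" for h :: "'z \<Rightarrow> real"
  proof -
    have "(\<Sum>i=1..n. h (S i)) = (\<Sum>j=1..n. h (S (perm j)))"
      using sum.reindex_bij_betw[OF pi_perm, of "\<lambda>i. h (S i)"] by simp
    also have "\<dots> = (\<Sum>t<n. h (z t))"
      using sum.atLeast1_atMost_eq[of "\<lambda>j. h (S (perm j))" n] by (simp add: z_def)
    finally show ?thesis .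
  qed
  have "emp_risk f S n w0 - emp_risk f S n y = (1 / real n) * (\<Sum>t<n. f w0 (z t) - f y (z t))"
    unfolding emp_risk_def using reidx[of "\<lambda>s. f w0 s"] reidx[of "\<lambda>s. f y s"]
    by (simp add: sum_subtractf right_diff_distrib)
  hence "2 * real n * (eta * (emp_risk f S n w0 - emp_risk f S n y))
       = (\<Sum>t<n. 2 * eta * (f w0 (z t) - f y (z t)))"
    using n_pos by (simp add: sum_distrib_left algebra_simps)
  also have "\<dots> \<le> ((norm (w0 - y))\<^sup>2 - (norm (w n - y))\<^sup>2) + eta\<^sup>2 * L\<^sup>2 * (real n * (real n + 2))"
    using A by (smt (verit) mult_nonneg_nonneg of_nat_0_le_iff zero_le_power2 mult_left_mono)
  finally have B: "2 * real n * (eta * (emp_risk f S n w0 - emp_risk f S n y))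
      \<le> ((norm (w0 - y))\<^sup>2 - (norm (w n - y))\<^sup>2) + eta\<^sup>2 * L\<^sup>2 * (real n * (real n + 2))" .
  have np: "real n > 0" using n_pos by simp
  show ?thesis
    using B np unfolding w_def[symmetric]
    by (simp add: field_simps)
qed

theorem lemmaC1:
  fixes X U :: "'a::euclidean_space set" and Z :: "'z set"
    and f :: "'a \<Rightarrow> 'z \<Rightarrow> real" and g :: "'a \<Rightarrow> 'z \<Rightarrow> 'a"
    and L :: real and n :: nat and S :: "nat \<Rightarrow> 'z" and perm :: "nat \<Rightarrow> nat"
    and eta :: "nat \<Rightarrow> real" and x :: "nat \<Rightarrow> 'a"
  assumes X_closed: "closed X" and X_convex: "convex X"
    and U_open: "open U" and XU: "X \<subseteq> U"
    and f_convex: "\<And>z. z \<in> Z \<Longrightarrow> convex_on U (\<lambda>w. f w z)"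
    and f_lip: "\<And>z. z \<in> Z \<Longrightarrow> L-lipschitz_on U (\<lambda>w. f w z)"
    and g_subgrad: "\<And>z w v. z \<in> Z \<Longrightarrow> w \<in> U \<Longrightarrow> v \<in> U \<Longrightarrow>
                      f v z \<ge> f w z + g w z \<bullet> (v - w)"
    and g_bound: "\<And>z w. z \<in> Z \<Longrightarrow> w \<in> U \<Longrightarrow> norm (g w z) \<le> L"
    and n_pos: "n \<ge> 1"
    and S_in: "\<And>i. i \<in> {1..n} \<Longrightarrow> S i \<in> Z"
    and pi_perm: "bij_betw perm {1..n} {1..n}"
    and eta_pos: "\<And>k. k \<ge> 1 \<Longrightarrow> eta k > 0"
    and x1: "x 1 \<in> X"
    and x_epoch: "\<And>k. k \<ge> 1 \<Longrightarrow> x (Suc k) = perm_sgd_inner X g S perm (eta k) (x k) n"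
  shows "\<forall>k\<ge>1. \<forall>y\<in>X.
           eta k * (emp_risk f S n (x k) - emp_risk f S n y)
             \<le> 1 / (2 * real n) * ((norm (x k - y))\<^sup>2 - (norm (x (Suc k) - y))\<^sup>2)
               + (eta k)\<^sup>2 * L\<^sup>2 * (real n + 2) / 2"
proof -
  have Xne: "X \<noteq> {}" using x1 by auto
  have xX: "k \<ge> 1 \<Longrightarrow> x k \<in> X" for k
  proof (induction k rule: dec_induct)
    case base then show ?case using x1 .
  next
    case (step m)
    have "perm_sgd_inner X g S perm (eta m) (x m) n \<in> X"
      using step.IH by (cases n) (auto intro: closest_point_in_set[OF X_closed Xne])
    then show ?case using x_epoch[OF step.hyps(1)] by simp
  qed
  show ?thesis
  proof (intro allI impI ballI)
    fix k :: nat and y assume k: "k \<ge> 1" and y: "y \<in> X"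
    show "eta k * (emp_risk f S n (x k) - emp_risk f S n y)
             \<le> 1 / (2 * real n) * ((norm (x k - y))\<^sup>2 - (norm (x (Suc k) - y))\<^sup>2)
               + (eta k)\<^sup>2 * L\<^sup>2 * (real n + 2) / 2"
      using epoch_bound[OF X_closed X_convex XU f_lip g_subgrad g_bound n_pos S_in pi_perm
          eta_pos[OF k] xX[OF k] y] x_epoch[OF k] by simp
  qed
qed

end
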